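(* Let $\mathcal{S}=(\sigma_{ij})\in\mathrm{SL}(2,\mathbb{Z})$ with $\mathrm{tr}(\mathcal{S})>2$, let $\lambda>1$ be its eigenvalue greater than $1$, and let $P$ be a real matrix with $\det P=1$ and $P\mathcal{S}P^{-1}=\mathrm{diag}(1/\lambda,\lambda)$. Let $A=\begin{pmatrix}1&0\\0&-1\end{pmatrix}$ and let $\mathbb{Z}_\Phi=\langle \mathbf{t}_3\rangle\times\langle\bar\alpha\rangle\cong\mathbb{Z}\times\mathbb{Z}_2$. Then there is no homomorphism $\varphi:\mathbb{Z}_\Phi\to\mathrm{GL}(2,\mathbb{Z})$ with $\varphi(\mathbf{t}_3)=\mathcal{S}$ and $\varphi(\bar\alpha)=P^{-1}AP$.
   Context: Here $\mathbb{Z}_\Phi$ is the extension of $\mathbb{Z}=\langle\mathbf{t}_3\rangle$ by $\Phi=\langle A\rangle\cong\mathbb{Z}_2$ with $\bar\alpha=(\mathbf{t}_3^0,A)$ commuting with $\mathbf{t}_3$ (since $A$ is diagonal it acts trivially on the $\mathbb{R}$-factor of $\mathrm{Sol}^3$). *)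

theory Defs
  imports "HOL-Analysis.Analysis" "HOL-Algebra.Elementary_Groups"
begin

type_synonym mat2 = "real^2^2"

definition int_matrix :: "mat2 \<Rightarrow> bool" where
  "int_matrix M \<longleftrightarrow> (\<forall>i j. M $ i $ j \<in> \<int>)"

definition SL2Z :: "mat2 set" where
  "SL2Z = {M. int_matrix M \<and> det M = 1}"

definition GL2Z_set :: "mat2 set" where
  "GL2Z_set = {M. int_matrix M \<and> (det M = 1 \<or> det M = -1)}"

definition GL2Z :: "mat2 monoid" where
  "GL2Z = \<lparr>carrier = GL2Z_set, mult = (\<lambda>M N. M ** N), one = mat 1\<rparr>"

definition diag2 :: "real \<Rightarrow> real \<Rightarrow> mat2" where
  "diag2 a b = (\<chi> i j. if i = j then (if i = 1 then a else b) else 0)"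

text \<open>The group Z_Phi = <t3> x <alpha-bar>, Z x Z_2; t3 = (1,0), alpha-bar = (0,1).\<close>
definition ZPhi :: "(int \<times> int) monoid" where
  "ZPhi = DirProd integer_group (integer_mod_group 2)"

end

theory Submission
  imports Defs
begin
lemma no_int_sq:
  fixes t n :: int
  assumes "t \<ge> 3" "t^2 - 4 = n^2"
  shows False
proof -
  have "(t - \<bar>n\<bar>) * (t + \<bar>n\<bar>) = 4" using assms by (simp add: algebra_simps power2_eq_square)
  moreover have "t + \<bar>n\<bar> \<ge> 3" using assms by simp
  moreover have "t - \<bar>n\<bar> > 0"
  proof (rule ccontr)
    assume "\<not> t - \<bar>n\<bar> > 0"
    then have "t - \<bar>n\<bar> \<le> 0" by simp
    with \<open>t + \<bar>n\<bar> \<ge> 3\<close> have "(t - \<bar>n\<bar>) * (t + \<bar>n\<bar>) \<le> 0"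
      by (simp add: mult_nonpos_nonneg)
    with calculation show False by simp
  qed
  ultimately show False
  proof -
    assume h: "(t - \<bar>n\<bar>) * (t + \<bar>n\<bar>) = 4" "t + \<bar>n\<bar> \<ge> 3" "t - \<bar>n\<bar> > 0"
    have "t + \<bar>n\<bar> dvd 4" using h(1) by (metis dvd_triv_right)
    then have "t + \<bar>n\<bar> \<le> 4" by (simp add: zdvd_imp_le)
    have "t + \<bar>n\<bar> = 4"
    proof (rule ccontr)
      assume "t + \<bar>n\<bar> \<noteq> 4"
      then have "t + \<bar>n\<bar> = 3" using \<open>t + \<bar>n\<bar> \<le> 4\<close> h(2) by simp
      then have "(t - \<bar>n\<bar>) * 3 = 4" using h(1) by simp
      then show False by presburger
    qed
    then have "(t - \<bar>n\<bar>) * 4 = 4" using h(1) by simp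
    then have "t - \<bar>n\<bar> = 1" by simp
    then show False using \<open>t + \<bar>n\<bar> = 4\<close> by presburger
  qed
qed

theorem lemma3p4:
  fixes S P :: mat2 and lambda :: real
  assumes "S \<in> SL2Z"
    and "trace S > 2"
    and "lambda > 1"
    and "det P = 1"
    and "P ** S ** matrix_inv P = diag2 (1 / lambda) lambda"
  shows "\<not> (\<exists>\<phi>. \<phi> \<in> hom ZPhi GL2Z \<and> \<phi> (1, 0) = S
              \<and> \<phi> (0, 1) = matrix_inv P ** diag2 1 (-1) ** P)"
proof
  assume "\<exists>\<phi>. \<phi> \<in> hom ZPhi GL2Z \<and> \<phi> (1, 0) = S
              \<and> \<phi> (0, 1) = matrix_inv P ** diag2 1 (-1) ** P"
  then obtain \<phi> where hom: "\<phi> \<in> hom ZPhi GL2Z" and h1: "\<phi> (1, 0) = S"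
    and h2: "\<phi> (0, 1) = matrix_inv P ** diag2 1 (-1) ** P" by blast
  define Q where "Q = matrix_inv P"
  define D where "D = diag2 1 (-1)"
  define B where "B = Q ** D ** P"
  have "invertible P" using assms(4) invertible_det_nz by force
  then have "\<exists>A'. P ** A' = mat 1 \<and> A' ** P = mat 1" unfolding invertible_def by blast
  then have PQ: "P ** Q = mat 1" and QP: "Q ** P = mat 1"
    unfolding Q_def matrix_inv_def by (metis (mono_tags, lifting) someI_ex)+
  have carr: "(1::int, 0::int) \<in> carrier ZPhi" "(0::int, 1::int) \<in> carrier ZPhi"
    by (auto simp: ZPhi_def DirProd_def carrier_integer_mod_group)
  have m1: "(1::int, 0::int) \<otimes>\<^bsub>ZPhi\<^esub> (0, 1) = (1, 1)"
    and m2: "(0::int, 1::int) \<otimes>\<^bsub>ZPhi\<^esub> (1, 0) = (1, 1)"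
    by (simp_all add: ZPhi_def DirProd_def integer_group_def)
  have "\<phi> (1,1) = S ** \<phi> (0,1)" "\<phi> (1,1) = \<phi> (0,1) ** S"
  proof -
    have hm: "\<forall>x\<in>carrier ZPhi. \<forall>y\<in>carrier ZPhi. \<phi> (x \<otimes>\<^bsub>ZPhi\<^esub> y) = \<phi> x \<otimes>\<^bsub>GL2Z\<^esub> \<phi> y"
      using hom by (simp add: hom_def)
    have x1: "\<phi> ((1::int, 0::int) \<otimes>\<^bsub>ZPhi\<^esub> (0, 1)) = \<phi> (1,0) ** \<phi> (0,1)"
      using hm carr by (simp add: GL2Z_def)
    have x2: "\<phi> ((0::int, 1::int) \<otimes>\<^bsub>ZPhi\<^esub> (1, 0)) = \<phi> (0,1) ** \<phi> (1,0)"
      using hm carr by (simp add: GL2Z_def)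
    show "\<phi> (1,1) = S ** \<phi> (0,1)" using x1 m1 h1 by simp
    show "\<phi> (1,1) = \<phi> (0,1) ** S" using x2 m2 h1 by simp
  qed
  then have comm: "S ** B = B ** S" using h2 by (simp add: B_def Q_def D_def)
  have "\<phi> (0,1) \<in> GL2Z_set" using hom carr unfolding hom_def GL2Z_def by auto
  then have Bint: "int_matrix B" using h2 by (simp add: GL2Z_set_def B_def Q_def D_def)
  have DD: "D ** D = mat 1"
    by (simp add: D_def diag2_def matrix_matrix_mult_def vec_eq_iff forall_2 sum_2 mat_def)
  have "B ** B = Q ** D ** (P ** Q) ** D ** P" by (simp add: B_def matrix_mul_assoc)
  also have "\<dots> = Q ** (D ** D) ** P" by (simp add: PQ matrix_mul_assoc)
  also have "\<dots> = mat 1" by (simp add: DD QP)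
  finally have BB: "B ** B = mat 1" .
  have "det Q * det P = 1" using QP by (metis det_I det_mul)
  then have dQ: "det Q = 1" using assms(4) by simp
  have "det D = -1" by (simp add: D_def diag2_def det_2)
  then have dB: "det B = -1" by (simp add: B_def det_mul dQ assms(4))
  have Sint: "int_matrix S" "det S = 1" using assms(1) by (auto simp: SL2Z_def)
  obtain a b c d where abcd: "S$1$1 = of_int a" "S$1$2 = of_int b" "S$2$1 = of_int c" "S$2$2 = of_int d"
    using Sint(1) unfolding int_matrix_def by (meson Ints_cases)
  obtain p q r u where pqrs: "B$1$1 = of_int p" "B$1$2 = of_int q" "B$2$1 = of_int r" "B$2$2 = of_int u"
    using Bint unfolding int_matrix_def by (meson Ints_cases)
  have BBe: "p*p + q*r = 1" "p*q + q*u = 0" "r*p + u*r = 0" "r*q + u*u = 1"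
    using BB unfolding vec_eq_iff forall_2
    by (simp_all add: matrix_matrix_mult_def sum_2 mat_def pqrs flip: of_int_mult of_int_add)
  have dBe: "p*u - q*r = -1" using dB by (simp add: det_2 pqrs flip: of_int_mult of_int_diff)
  have dSe: "a*d - b*c = 1" using Sint(2) by (simp add: det_2 abcd flip: of_int_mult of_int_diff)
  have tr: "a + d > 2" using assms(2) by (simp add: trace_def sum_2 abcd flip: of_int_add)
  have Ce: "a*p + b*r = p*a + q*c" "a*q + b*u = p*b + q*d" "c*p + d*r = r*a + u*c" "c*q + d*u = r*b + u*d"
    using comm unfolding vec_eq_iff forall_2
    by (simp_all add: matrix_matrix_mult_def sum_2 abcd pqrs flip: of_int_mult of_int_add)
  have "(p + u) * (p + u) = 0" using BBe dBe by algebra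
  then have sp: "u = - p" by simp
  have e1: "q * (a - d) = 2*p*b" using Ce(2) sp by algebra
  have e2: "r * (a - d) = 2*p*c" using Ce(3) sp by algebra
  have e3: "b*r = q*c" using Ce(1) by algebra
  have pq1: "p*p + q*r = 1" using BBe by simp
  have "((a+d)^2 - 4) * q^2 = (2*b)^2"
  proof -
    have "((a+d)^2 - 4) = (a-d)^2 + 4*b*c" using dSe by algebra
    then have "((a+d)^2 - 4) * q^2 = (q*(a-d))^2 + 4*b*q*(c*q)" by algebra
    also have "\<dots> = (2*p*b)^2 + 4*b*q*(b*r)" using e1 e3 by simp
    also have "\<dots> = (2*b)^2 * (p*p + q*r)" by algebra
    finally show ?thesis using pq1 by simp
  qed
  moreover have "((a+d)^2 - 4) * r^2 = (2*c)^2"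
  proof -
    have "((a+d)^2 - 4) = (a-d)^2 + 4*b*c" using dSe by algebra
    then have "((a+d)^2 - 4) * r^2 = (r*(a-d))^2 + 4*c*r*(b*r)" by algebra
    also have "\<dots> = (2*p*c)^2 + 4*c*r*(q*c)" using e2 e3 by simp
    also have "\<dots> = (2*c)^2 * (p*p + q*r)" by algebra
    finally show ?thesis using pq1 by simp
  qed
  moreover have "q \<noteq> 0 \<or> r \<noteq> 0"
  proof (rule ccontr)
    assume "\<not> (q \<noteq> 0 \<or> r \<noteq> 0)"
    then have "q = 0" "r = 0" by auto
    then have "p*p = 1" using pq1 by simp
    then have "p \<noteq> 0" by auto
    then have "b = 0" "c = 0" using e1 e2 \<open>q = 0\<close> \<open>r = 0\<close> by auto
    then have "a*d = 1" using dSe by simp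
    then have "\<bar>a\<bar> = 1" "\<bar>d\<bar> = 1" using zmult_eq_1_iff by auto
    then show False using tr by linarith
  qed
  ultimately obtain m k :: int where mk: "k \<noteq> 0" "((a+d)^2 - 4) * k^2 = m^2" by blast
  have "k^2 dvd m^2" using mk(2) by (metis dvd_triv_right)
  then have "k dvd m" by simp
  then obtain j where "m = k*j" by blast
  then have "((a+d)^2 - 4) * k^2 = j^2 * k^2" using mk(2) by (simp add: power_mult_distrib)
  then have "(a+d)^2 - 4 = j^2" using mk(1) by simp
  then show False using no_int_sq tr by force
qed

end
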